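(* Let $a_1,\dots,a_J\in\mathbb{C}$ and $0<\delta<1$. Then $$\int_{(\mathbb{R}/\mathbb{Z})^J}\frac{d\theta_1\cdots d\theta_J}{|\sum_{j=1}^Ja_je^{2\pi i\theta_j}|^\delta}=\int_{(\mathbb{R}/\mathbb{Z})^{J-1}}\frac{d\theta_1\cdots d\theta_{J-1}}{|\sum_{j=1}^{J-1}a_je^{2\pi i\theta_j}+a_J|^\delta}\sim\frac{1}{(\sum_{j=1}^J|a_j|)^\delta},$$ where the implied constants depend only on $\delta$ and $J$ (with $1/0=\infty$). *)

theory Defs
  imports "HOL-Analysis.Analysis"
begin

text \<open>The torus (R/Z)^n, realised as [0,1)^n with Lebesgue (product) measure,
  coordinates indexed by {..<n}.\<close>
definition torus :: "nat \<Rightarrow> (nat \<Rightarrow> real) measure" where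
  "torus n = PiM {..<n} (\<lambda>_. restrict_space lborel {0..<1})"

definition inv_abs_powr :: "real \<Rightarrow> complex \<Rightarrow> ennreal" where
  "inv_abs_powr \<delta> z = (if z = 0 then \<infinity> else ennreal (1 / (norm z powr \<delta>)))"

definition inv_powr :: "real \<Rightarrow> real \<Rightarrow> ennreal" where
  "inv_powr \<delta> x = (if x = 0 then \<infinity> else ennreal (1 / (x powr \<delta>)))"

definition e2pi :: "real \<Rightarrow> complex" where
  "e2pi t = exp (2 * complex_of_real pi * \<i> * complex_of_real t)"

end

theory Submission imports Defs "HOL-Probability.Probability" begin

abbreviation U01 :: "real measure" where "U01 \<equiv> restrict_space lborel {0..<1::real}"

lemma prob_U01: "prob_space U01"
  by (rule prob_space_restrict_space) auto

lemma e2pi_add: "e2pi (x + y) = e2pi x * e2pi y"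
  unfolding e2pi_def by (simp add: distrib_left exp_add[symmetric] algebra_simps)

lemma norm_e2pi[simp]: "norm (e2pi x) = 1"
proof -
  have "e2pi x = exp (\<i> * complex_of_real (2*pi*x))" unfolding e2pi_def by (simp add: algebra_simps)
  then show ?thesis by (simp only: norm_exp_i_times)
qed

lemma e2pi_int: "e2pi (of_int k) = 1"
proof -
  have "e2pi (of_int k) = exp (2 * pi * \<i> * of_int k)" unfolding e2pi_def by simp
  also have "\<dots> = 1" by (simp add: exp_eq_1) 
  finally show ?thesis .
qed

lemma e2pi_frac: "e2pi (frac x) = e2pi x"
proof -
  have "x = frac x + of_int (floor x)" by (simp add: frac_def)
  then have "e2pi x = e2pi (frac x) * e2pi (of_int (floor x))" by (metis e2pi_add)
  then show ?thesis by (simp add: e2pi_int)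
qed

lemma e2pi_cont: "continuous_on UNIV e2pi"
  unfolding e2pi_def by (intro continuous_intros)

lemma e2pi_meas[measurable]: "e2pi \<in> borel_measurable borel"
  using e2pi_cont by (rule borel_measurable_continuous_onI)

lemma inv_abs_powr_meas[measurable]: "inv_abs_powr d \<in> borel_measurable borel"
  unfolding inv_abs_powr_def by measurable

lemma inv_abs_powr_unit: "norm u = 1 \<Longrightarrow> inv_abs_powr d (u * z) = inv_abs_powr d z"
  unfolding inv_abs_powr_def by (auto simp: norm_mult)

lemma inv_abs_powr_scale:
  assumes "A \<noteq> 0"
  shows "inv_abs_powr d (A * z) = ennreal (1 / norm A powr d) * inv_abs_powr d z"
  using assms unfolding inv_abs_powr_def
  by (auto simp: norm_mult ennreal_mult_top powr_mult ennreal_mult[symmetric])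


lemma frac_meas[measurable]: "(frac :: real \<Rightarrow> real) \<in> borel_measurable borel"
  unfolding frac_def by measurable

lemma lborel_transl: "emeasure lborel ((+) (c::real) -` X) = emeasure lborel X"
  if "X \<in> sets borel" for X
proof -
  have "emeasure lborel X = emeasure (distr lborel borel ((+) c)) X" by (simp add: lborel_distr_plus)
  also have "\<dots> = emeasure lborel ((+) c -` X)" using that by (subst emeasure_distr) auto
  finally show ?thesis by simp
qed

lemma frac_shift_eq:
  fixes x s :: real
  assumes "0 \<le> x" "x < 1" "0 \<le> s" "s < 1"
  shows "frac (x + s) = (if x + s < 1 then x + s else x + s - 1)"
proof (cases "x + s < 1")
  case True then show ?thesis using assms by (simp add: frac_eq)
next
  case False
  then have "frac (x + s) = frac (x + s - 1)" by (metis frac_1_eq diff_add_cancel)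
  also have "\<dots> = x + s - 1" using assms False by (subst frac_eq) auto
  finally show ?thesis using False by simp
qed

lemma U01_shift: "distr U01 U01 (\<lambda>x. frac (x + t)) = U01"
proof (rule measure_eqI)
  show "sets (distr U01 U01 (\<lambda>x. frac (x + t))) = sets U01" by simp
next
  fix A assume "A \<in> sets (distr U01 U01 (\<lambda>x. frac (x + t)))"
  then have A: "A \<in> sets U01" by simp
  then have Ab: "A \<in> sets borel" and Asub: "A \<subseteq> {0..<1}"
    by (auto simp: sets_restrict_space_iff)
  have meas: "(\<lambda>x. frac (x + t)) \<in> measurable U01 U01"
    by (intro measurable_restrict_space1 measurable_restrict_space2) (auto simp: frac_lt_1)
  define s where "s = frac t"
  have s: "0 \<le> s" "s < 1" by (auto simp: s_def frac_lt_1)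
  have fx: "frac (x + t) = frac (x + s)" for x
  proof -
    have "x + t = (x + s) + of_int (floor t)" by (simp add: s_def frac_def)
    then show ?thesis by (metis frac_add_of_int_right)
  qed
  define B1 where "B1 = {x. x + s \<in> A \<inter> {s..<1}}"
  define B2 where "B2 = {x. x + s - 1 \<in> A \<inter> {0..<s}}"
  have B1': "B1 = (+) s -` (A \<inter> {s..<1})" by (auto simp: B1_def add.commute)
  have B2': "B2 = (+) (s - 1) -` (A \<inter> {0..<s})" by (auto simp: B2_def algebra_simps)
  have P: "(\<lambda>x. frac (x + t)) -` A \<inter> space U01 = B1 \<union> B2"
  proof (intro set_eqI iffI)
    fix x assume "x \<in> (\<lambda>x. frac (x + t)) -` A \<inter> space U01"
    then have x: "0 \<le> x" "x < 1" "frac (x + s) \<in> A" by (auto simp: fx)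
    show "x \<in> B1 \<union> B2"
    proof (cases "x + s < 1")
      case True
      then show ?thesis using x frac_shift_eq[OF x(1,2) s] by (simp add: B1_def add.commute)
    next
      case False
      have e: "s - 1 + x = x + s - 1" by simp
      from False show ?thesis using x frac_shift_eq[OF x(1,2) s] s
        by (simp add: B2_def)
    qed
  next
    fix x assume "x \<in> B1 \<union> B2"
    then have "(0 \<le> x \<and> x < 1 - s \<and> x + s \<in> A) \<or> (1 - s \<le> x \<and> x < 1 \<and> x + s - 1 \<in> A)"
      using Asub by (auto simp: B1_def B2_def)
    then show "x \<in> (\<lambda>x. frac (x + t)) -` A \<inter> space U01"
      using s frac_shift_eq[of x s] by (auto simp: fx)
  qed
  have B1b: "B1 \<in> sets borel" "B2 \<in> sets borel" unfolding B1' B2' using Ab by auto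
  have "emeasure (distr U01 U01 (\<lambda>x. frac (x + t))) A = emeasure U01 (B1 \<union> B2)"
    using meas A by (simp add: emeasure_distr P[symmetric])
  also have "\<dots> = emeasure lborel (B1 \<union> B2)"
    using Asub s by (subst emeasure_restrict_space) (auto simp: B1_def B2_def)
  also have "\<dots> = emeasure lborel B1 + emeasure lborel B2"
    using B1b by (intro plus_emeasure[symmetric]) (auto simp: B1_def B2_def)
  also have "\<dots> = emeasure lborel (A \<inter> {s..<1}) + emeasure lborel (A \<inter> {0..<s})"
    unfolding B1' B2' using Ab by (simp only: lborel_transl sets_lborel Int_lower1 sets.Int atLeastLessThan_borel)
  also have "\<dots> = emeasure lborel ((A \<inter> {s..<1}) \<union> (A \<inter> {0..<s}))"
    using Ab by (intro plus_emeasure) auto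
  also have "(A \<inter> {s..<1}) \<union> (A \<inter> {0..<s}) = A" using Asub s by auto
  also have "emeasure lborel A = emeasure U01 A"
    using Asub by (subst emeasure_restrict_space) auto
  finally show "emeasure (distr U01 U01 (\<lambda>x. frac (x + t))) A = emeasure U01 A" .
qed


lemma U01_one[simp]: "emeasure U01 {0..<1} = 1"
  by (subst emeasure_restrict_space) auto

lemma prod_U01: "product_prob_space (\<lambda>_::nat. U01)"
  by (intro product_prob_spaceI prob_U01)

lemma torus_shift:
  assumes G[measurable]: "G \<in> borel_measurable (torus n)"
  shows "(\<integral>\<^sup>+ \<theta>. G (\<lambda>j\<in>{..<n}. frac (\<theta> j + t)) \<partial>torus n) = (\<integral>\<^sup>+ \<theta>. G \<theta> \<partial>torus n)"
proof -
  have meas: "(\<lambda>x. frac (x + t)) \<in> measurable U01 U01"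
    by (intro measurable_restrict_space1 measurable_restrict_space2) (auto simp: frac_lt_1)
  have d: "distr (torus n) (torus n) (compose {..<n} (\<lambda>x. frac (x + t))) = torus n"
    unfolding torus_def
    by (subst distr_PiM_finite_prob_space[OF _ prod_U01 prod_U01 meas]) (auto simp: U01_shift)
  have "(\<integral>\<^sup>+ \<theta>. G \<theta> \<partial>torus n) = (\<integral>\<^sup>+ \<theta>. G \<theta> \<partial>distr (torus n) (torus n) (compose {..<n} (\<lambda>x. frac (x + t))))"
    by (simp add: d)
  also have "\<dots> = (\<integral>\<^sup>+ \<theta>. G (compose {..<n} (\<lambda>x. frac (x + t)) \<theta>) \<partial>torus n)"
  proof (rule nn_integral_distr)
    show "compose {..<n} (\<lambda>x. frac (x + t)) \<in> measurable (torus n) (torus n)"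
      unfolding torus_def compose_def
    proof (intro measurable_restrict)
      fix i assume "i \<in> {..<n}"
      then have "(\<lambda>\<theta>. \<theta> i) \<in> measurable (PiM {..<n} (\<lambda>_. U01)) U01" by (rule measurable_component_singleton)
      then show "(\<lambda>\<theta>. frac (\<theta> i + t)) \<in> measurable (PiM {..<n} (\<lambda>_. U01)) U01"
        using meas by (rule measurable_compose)
    qed
  qed (use G in simp)
  finally show ?thesis by (simp add: compose_def)
qed

lemma F_meas_gen[measurable]:
  "(\<lambda>\<theta>. inv_abs_powr d ((\<Sum>j<m. a j * e2pi (\<theta> j)) + b)) \<in> borel_measurable (PiM I (\<lambda>_. U01))"
  if "{..<m} \<subseteq> I" for I m b a
proof -
  have "(\<lambda>\<theta>. (\<Sum>j<m. a j * e2pi (\<theta> j)) + b) \<in> borel_measurable (PiM I (\<lambda>_. U01))"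
  proof (intro borel_measurable_add borel_measurable_sum borel_measurable_times measurable_const)
    fix j assume "j \<in> {..<m}"
    then have "j \<in> I" using that by auto
    have "(\<lambda>x. x j) \<in> measurable (PiM I (\<lambda>_. U01)) U01" using \<open>j \<in> I\<close> by (rule measurable_component_singleton)
    moreover have "e2pi \<in> borel_measurable U01" by (rule measurable_restrict_space1) measurable
    ultimately show "(\<lambda>x. e2pi (x j)) \<in> borel_measurable (PiM I (\<lambda>_. U01))" by (rule measurable_compose)
  qed auto
  then show ?thesis by measurable
qed

lemma eq_part:
  "(\<integral>\<^sup>+ \<theta>. inv_abs_powr d (\<Sum>j<Suc n. a j * e2pi (\<theta> j)) \<partial>torus (Suc n))
   = (\<integral>\<^sup>+ \<theta>. inv_abs_powr d ((\<Sum>j<n. a j * e2pi (\<theta> j)) + a n) \<partial>torus n)"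
proof -
  interpret P: product_prob_space "\<lambda>_::nat. U01" by (rule prod_U01)
  interpret U: prob_space U01 by (rule prob_U01)
  define G where "G \<theta> = inv_abs_powr d ((\<Sum>j<n. a j * e2pi (\<theta> j)) + a n)" for \<theta> :: "nat \<Rightarrow> real"
  have Gm: "G \<in> borel_measurable (torus n)" unfolding G_def torus_def by (rule F_meas_gen) auto
  have sub: "{..<Suc n} \<subseteq> insert n {..<n}" by auto
  have fm: "(\<lambda>\<theta>. inv_abs_powr d (\<Sum>j<Suc n. a j * e2pi (\<theta> j))) \<in> borel_measurable (PiM (insert n {..<n}) (\<lambda>_. U01))"
    using F_meas_gen[OF sub, where b=0 and d=d and a=a] by (simp only: add_0_right)
  have "(\<integral>\<^sup>+ \<theta>. inv_abs_powr d (\<Sum>j<Suc n. a j * e2pi (\<theta> j)) \<partial>torus (Suc n))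
      = (\<integral>\<^sup>+ \<theta>. inv_abs_powr d (\<Sum>j<Suc n. a j * e2pi (\<theta> j)) \<partial>PiM (insert n {..<n}) (\<lambda>_. U01))"
    unfolding torus_def lessThan_Suc ..
  also have "\<dots> = (\<integral>\<^sup>+ y. (\<integral>\<^sup>+ x. inv_abs_powr d (\<Sum>j<Suc n. a j * e2pi ((x(n := y)) j)) \<partial>torus n) \<partial>U01)"
    unfolding torus_def by (rule P.product_nn_integral_insert_rev[OF _ _ fm]) auto
  also have "\<dots> = (\<integral>\<^sup>+ y. (\<integral>\<^sup>+ x. G x \<partial>torus n) \<partial>U01)"
  proof (rule nn_integral_cong)
    fix y :: real
    have "(\<integral>\<^sup>+ x. inv_abs_powr d (\<Sum>j<Suc n. a j * e2pi ((x(n := y)) j)) \<partial>torus n)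
        = (\<integral>\<^sup>+ x. G (\<lambda>j\<in>{..<n}. frac (x j + - y)) \<partial>torus n)"
    proof (rule nn_integral_cong)
      fix x :: "nat \<Rightarrow> real"
      have s1: "(\<Sum>j<Suc n. a j * e2pi ((x(n := y)) j)) = (\<Sum>j<n. a j * e2pi (x j)) + a n * e2pi y"
        by simp
      have s2: "(\<Sum>j<n. a j * e2pi ((\<lambda>j\<in>{..<n}. frac (x j + - y)) j)) + a n
          = e2pi (- y) * ((\<Sum>j<n. a j * e2pi (x j)) + a n * e2pi y)"
      proof -
        have "(\<Sum>j<n. a j * e2pi ((\<lambda>j\<in>{..<n}. frac (x j + - y)) j)) = (\<Sum>j<n. a j * e2pi (x j + - y))"
          by (intro sum.cong) (auto simp: e2pi_frac)
        also have "\<dots> = e2pi (- y) * (\<Sum>j<n. a j * e2pi (x j))"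
          unfolding sum_distrib_left
          by (intro sum.cong refl) (metis add.commute e2pi_add mult.left_commute)
        moreover have e1: "e2pi (-y) * e2pi y = 1" using e2pi_add[of "-y" y] by (simp add: e2pi_def)
        then have "e2pi (-y) * (a n * e2pi y) = a n" by (metis mult.left_commute mult.right_neutral)
        ultimately show ?thesis
          by (simp add: distrib_left)
      qed
      show "inv_abs_powr d (\<Sum>j<Suc n. a j * e2pi ((x(n := y)) j)) = G (\<lambda>j\<in>{..<n}. frac (x j + - y))"
        unfolding G_def s1 s2 by (simp add: inv_abs_powr_unit)
    qed
    also have "\<dots> = (\<integral>\<^sup>+ x. G x \<partial>torus n)" by (rule torus_shift[OF Gm])
    finally show "(\<integral>\<^sup>+ x. inv_abs_powr d (\<Sum>j<Suc n. a j * e2pi ((x(n := y)) j)) \<partial>torus n) = (\<integral>\<^sup>+ x. G x \<partial>torus n)" .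
  qed
  also have "\<dots> = (\<integral>\<^sup>+ x. G x \<partial>torus n)"
    by simp
  finally show ?thesis unfolding G_def .
qed


lemma sin_lower: fixes u :: real assumes "0 \<le> u" "u \<le> pi/2" shows "u/2 \<le> sin u"
proof -
  have "\<bar>sin u - (\<Sum>m<3. sin_coeff m * u ^ m)\<bar> \<le> inverse (fact 3) * \<bar>u\<bar> ^ 3"
    by (rule Maclaurin_sin_bound)
  moreover have "(\<Sum>m<3. sin_coeff m * u ^ m) = u"
    by (simp add: numeral_3_eq_3 sin_coeff_def)
  ultimately have "\<bar>sin u - u\<bar> \<le> u^3/6" using assms by (simp add: fact_numeral)
  then have "sin u \<ge> u - u^3/6" using abs_le_D2 by fastforce
  moreover have "u^2 \<le> 3"
  proof -
    have "pi \<le> 3.2" using pi_approx by simp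
    then have "u \<le> 1.6" using assms by linarith
    then have "u^2 \<le> 1.6^2" using assms by (intro power_mono) auto
    then show ?thesis by (simp add: power2_eq_square)
  qed
  then have "u^3/6 \<le> u/2" using assms
    by (auto simp: power3_eq_cube power2_eq_square mult_left_mono[of "u*u" 3 u, simplified])
  ultimately show ?thesis by linarith
qed

lemma e2pi_minus1: assumes "\<bar>x\<bar> \<le> 1/2" shows "2 * \<bar>x\<bar> \<le> norm (e2pi x - 1)"
proof -
  have "e2pi x = exp (\<i> * complex_of_real (2*pi*x))" unfolding e2pi_def by (simp add: algebra_simps)
  then have "norm (e2pi x - 1) = 2 * \<bar>sin (2*pi*x/2)\<bar>" by (simp only: dist_exp_i_1)
  also have "2*pi*x/2 = pi * x" by simp
  finally have "norm (e2pi x - 1) = 2 * \<bar>sin (pi * x)\<bar>" .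
  also have "\<bar>sin (pi * x)\<bar> = sin (pi * \<bar>x\<bar>)"
  proof (cases "x \<ge> 0")
    case True
    have "sin (pi * x) \<ge> 0" using True assms by (intro sin_ge_zero) auto
    then show ?thesis using True by simp
  next
    case False
    have a1: "0 \<le> pi * (-x)" using False pi_gt_zero by (intro mult_nonneg_nonneg) auto
    have a2: "pi*(-x) \<le> pi*1" using False assms by (intro mult_left_mono) auto
    have "sin (pi * (-x)) \<ge> 0" using a1 a2 by (intro sin_ge_zero) auto
    then show ?thesis using False by simp
  qed
  finally have eq: "norm (e2pi x - 1) = 2 * sin (pi * \<bar>x\<bar>)" .
  have "sin (pi * \<bar>x\<bar>) \<ge> pi * \<bar>x\<bar> / 2" using assms by (intro sin_lower) auto
  then have "norm (e2pi x - 1) \<ge> pi * \<bar>x\<bar>" unfolding eq by simp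
  moreover have "pi * \<bar>x\<bar> \<ge> 2 * \<bar>x\<bar>" using pi_gt3 by (intro mult_right_mono) auto
  ultimately show ?thesis by linarith
qed

lemma e2pi_plus1: "e2pi (x + 1) = e2pi x" and e2pi_minus1': "e2pi (x - 1) = e2pi x"
  using e2pi_int[of 1] e2pi_add[of x 1] e2pi_add[of "x - 1" 1] by auto

lemma e2pi_close:
  assumes "norm (e2pi y - e2pi y0) \<le> 2 * s" "\<bar>y - y0\<bar> < 1"
  shows "\<exists>k\<in>{-1,0,1::real}. \<bar>y - y0 - k\<bar> \<le> s"
proof -
  have "e2pi y - e2pi y0 = e2pi y0 * (e2pi (y - y0) - 1)"
    using e2pi_add[of y0 "y - y0"] by (simp add: algebra_simps)
  then have n: "norm (e2pi (y - y0) - 1) \<le> 2 * s" using assms(1) by (simp add: norm_mult)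
  define x where "x = y - y0"
  show ?thesis
  proof (cases "x < -1/2")
    case True
    have "2 * \<bar>x + 1\<bar> \<le> norm (e2pi (x + 1) - 1)" using True assms(2) by (intro e2pi_minus1) (auto simp: x_def)
    then have "\<bar>x + 1\<bar> \<le> s" using n by (simp add: e2pi_plus1 x_def)
    then show ?thesis by (auto simp: x_def intro!: bexI[of _ "-1"])
  next
    case False
    show ?thesis
    proof (cases "x > 1/2")
      case True
      have "2 * \<bar>x - 1\<bar> \<le> norm (e2pi (x - 1) - 1)" using True assms(2) by (intro e2pi_minus1) (auto simp: x_def)
      then have "\<bar>x - 1\<bar> \<le> s" using n by (simp add: e2pi_minus1' x_def)
      then show ?thesis by (auto simp: x_def intro!: bexI[of _ "1"])
    next
      case False2: False
      have "2 * \<bar>x\<bar> \<le> norm (e2pi x - 1)" using False False2 by (intro e2pi_minus1) auto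
      then have "\<bar>x\<bar> \<le> s" using n by (simp add: x_def)
      then show ?thesis by (auto simp: x_def intro!: bexI[of _ "0"])
    qed
  qed
qed


lemma S_sets: "{y\<in>{0..<1}. norm (e2pi y - p) \<le> s} \<in> sets U01"
proof -
  have "{y. norm (e2pi y - p) \<le> s} \<in> sets borel" by measurable
  then have "{y. norm (e2pi y - p) \<le> s} \<inter> {0..<1} \<in> sets borel" by auto
  moreover have "{y\<in>{0..<1}. norm (e2pi y - p) \<le> s} = {y. norm (e2pi y - p) \<le> s} \<inter> {0..<1}" by auto
  ultimately show ?thesis by (auto simp: sets_restrict_space_iff)
qed

lemma meas_bound:
  assumes "0 < s"
  shows "emeasure U01 {y\<in>{0..<1}. norm (e2pi y - p) \<le> s} \<le> ennreal (6 * s)"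
proof (cases "{y\<in>{0..<1}. norm (e2pi y - p) \<le> s} = {}")
  case True then show ?thesis by (subst True) simp
next
  case False
  define S where "S = {y\<in>{0..<1}. norm (e2pi y - p) \<le> s}"
  from False obtain y0 where y0: "y0 \<in> S" unfolding S_def by blast
  define I where "I k = {y0 + k - s .. y0 + k + s}" for k :: real
  have sub: "S \<subseteq> I (-1) \<union> I 0 \<union> I 1"
  proof
    fix y assume y: "y \<in> S"
    have "norm (e2pi y - e2pi y0) = norm ((e2pi y - p) - (e2pi y0 - p))" by simp
    also have "\<dots> \<le> norm (e2pi y - p) + norm (e2pi y0 - p)" by (rule norm_triangle_ineq4)
    also have "\<dots> \<le> 2 * s" using y y0 by (simp add: S_def)
    finally have "norm (e2pi y - e2pi y0) \<le> 2 * s" .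
    moreover have "\<bar>y - y0\<bar> < 1" using y y0 by (auto simp: S_def)
    ultimately obtain k where "k \<in> {-1,0,1::real}" "\<bar>y - y0 - k\<bar> \<le> s" using e2pi_close by blast
    then show "y \<in> I (-1) \<union> I 0 \<union> I 1" by (auto simp: I_def abs_le_iff)
  qed
  have II: "emeasure lborel (I k) = ennreal (2 * s)" for k
    using assms by (simp add: I_def)
  have "emeasure U01 S = emeasure lborel S"
    by (subst emeasure_restrict_space) (auto simp: S_def)
  also have "\<dots> \<le> emeasure lborel (I (-1) \<union> I 0 \<union> I 1)"
    by (rule emeasure_mono[OF sub]) (auto simp: I_def)
  also have "\<dots> \<le> emeasure lborel (I (-1) \<union> I 0) + emeasure lborel (I 1)"
    by (rule emeasure_subadditive) (auto simp: I_def)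
  also have "\<dots> \<le> emeasure lborel (I (-1)) + emeasure lborel (I 0) + emeasure lborel (I 1)"
    by (intro add_right_mono emeasure_subadditive) (auto simp: I_def)
  also have "\<dots> = ennreal (6 * s)" using assms
    by (simp add: II ennreal_plus[symmetric] del: ennreal_plus)
  finally show ?thesis unfolding S_def .
qed

lemma dyadic_ex:
  fixes x :: real assumes "0 < x" "x < 1"
  shows "\<exists>k. (1/2)^Suc k < x \<and> x \<le> (1/2)^k"
proof (rule ccontr)
  assume H: "\<not> ?thesis"
  have "x \<le> (1/2)^k" for k
  proof (induction k)
    case 0 then show ?case using assms by simp
  next
    case (Suc k) then show ?case using H not_less by blast
  qed
  moreover obtain n where "(1/2::real)^n < x" using real_arch_pow_inv[OF assms(1), of "1/2"] by auto
  ultimately show False by (meson not_less)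
qed

lemma not_summable_pow:
  fixes b :: real assumes "1 \<le> b"
  shows "(\<Sum>k. ennreal (b ^ Suc k)) = top"
proof (rule summable_iff_suminf_neq_top)
  show "0 \<le> b ^ Suc k" for k using assms by simp
  show "\<not> summable (\<lambda>k. b ^ Suc k)"
  proof
    assume "summable (\<lambda>k. b ^ Suc k)"
    then have "(\<lambda>k. b ^ Suc k) \<longlonglongrightarrow> 0" by (rule summable_LIMSEQ_zero)
    moreover have "1 \<le> b ^ Suc k" for k by (rule one_le_power[OF assms])
    ultimately have "1 \<le> (0::real)" by (intro LIMSEQ_le_const) auto
    then show False by simp
  qed
qed

lemma ennreal_le_suminf: "(f k :: ennreal) \<le> (\<Sum>k. f k)"
  using sum_le_suminf[OF summableI, of "{k}" f] by simp

lemma pointwise: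
  fixes d :: real assumes "0 < d"
  shows "inv_abs_powr d z \<le> 1 + (\<Sum>k. ennreal ((2 powr d) ^ Suc k) * indicator {z. norm z \<le> (1/2)^k} z)"
proof -
  have b1: "1 \<le> 2 powr d" using assms by (simp add: ge_one_powr_ge_zero)
  consider "z = 0" | "norm z \<ge> 1" | "0 < norm z" "norm z < 1" by force
  then show ?thesis
  proof cases
    case 1
    then have "(\<Sum>k. ennreal ((2 powr d) ^ Suc k) * indicator {z. norm z \<le> (1/2)^k} z) = (\<Sum>k. ennreal ((2 powr d) ^ Suc k))"
      by simp
    then show ?thesis using not_summable_pow[OF b1] by simp
  next
    case 2
    then have "inv_abs_powr d z \<le> 1" using assms
      by (auto simp: inv_abs_powr_def ge_one_powr_ge_zero)
    then show ?thesis by (rule order_trans) simp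
  next
    case 3
    obtain k where k: "(1/2)^Suc k < norm z" "norm z \<le> (1/2)^k" using dyadic_ex[OF 3] by blast
    have "1 / norm z powr d \<le> 1 / ((1/2)^Suc k) powr d"
      using k 3 assms by (intro divide_left_mono powr_mono2) auto
    also have "\<dots> = (2 powr d) ^ Suc k"
    proof -
      have e1: "(2 powr d)^Suc k = 2 powr (real (Suc k) * d)" by (rule powr_power) simp
      have e2: "((1/2::real)^Suc k) powr d = 1 / 2 powr (real (Suc k) * d)"
        by (simp only: power_one_over powr_divide powr_one powr_realpow[symmetric] powr_powr) simp
      show ?thesis unfolding e1 e2 by simp
    qed
    finally have "inv_abs_powr d z \<le> ennreal ((2 powr d) ^ Suc k) * indicator {z. norm z \<le> (1/2)^k} z"
      using 3 k by (auto simp: inv_abs_powr_def)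
    also have "\<dots> \<le> (\<Sum>k. ennreal ((2 powr d) ^ Suc k) * indicator {z. norm z \<le> (1/2)^k} z)"
      by (rule ennreal_le_suminf)
    finally show ?thesis by (rule order_trans) simp
  qed
qed


definition Kd :: "real \<Rightarrow> real" where "Kd d = 1 + 6 * (2 powr d) / (1 - 2 powr d / 2)"

lemma int_bound:
  assumes d: "0 < d" "d < 1"
  shows "(\<integral>\<^sup>+ y. inv_abs_powr d (e2pi y - p) \<partial>U01) \<le> ennreal (Kd d)"
proof -
  define b where "b = (2::real) powr d"
  have b1: "1 \<le> b" using d by (simp add: b_def ge_one_powr_ge_zero)
  have b2: "b < 2" using d powr_less_mono[of d 1 "2::real"] by (simp add: b_def)
  define S where "S k = {y\<in>{0..<1}. norm (e2pi y - p) \<le> (1/2::real)^k}" for k :: nat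
  have Ss[measurable]: "S k \<in> sets U01" for k unfolding S_def by (rule S_sets)
  have "(\<integral>\<^sup>+ y. inv_abs_powr d (e2pi y - p) \<partial>U01)
      \<le> (\<integral>\<^sup>+ y. 1 + (\<Sum>k. ennreal (b ^ Suc k) * indicator (S k) y) \<partial>U01)"
  proof (rule nn_integral_mono)
    fix y assume "y \<in> space U01"
    then have y: "y \<in> {0..<1}" by simp
    have "indicator {z. norm z \<le> (1/2::real)^k} (e2pi y - p) = (indicator (S k) y :: ennreal)" for k
      using y by (auto simp: S_def indicator_def)
    then show "inv_abs_powr d (e2pi y - p) \<le> 1 + (\<Sum>k. ennreal (b ^ Suc k) * indicator (S k) y)"
      using pointwise[OF d(1), of "e2pi y - p"] by (simp add: b_def)
  qed
  also have "\<dots> = (\<integral>\<^sup>+ y. 1 \<partial>U01) + (\<integral>\<^sup>+ y. (\<Sum>k. ennreal (b ^ Suc k) * indicator (S k) y) \<partial>U01)"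
    by (rule nn_integral_add) auto
  also have "(\<integral>\<^sup>+ y. (\<Sum>k. ennreal (b ^ Suc k) * indicator (S k) y) \<partial>U01)
      = (\<Sum>k. (\<integral>\<^sup>+ y. ennreal (b ^ Suc k) * indicator (S k) y \<partial>U01))"
    by (rule nn_integral_suminf) auto
  also have "\<dots> = (\<Sum>k. ennreal (b ^ Suc k) * emeasure U01 (S k))"
    by (simp add: nn_integral_cmult_indicator)
  also have "\<dots> \<le> (\<Sum>k. ennreal (6 * b * (b/2)^k))"
  proof (rule suminf_le[OF _ summableI summableI])
    fix k
    have "ennreal (b ^ Suc k) * emeasure U01 (S k) \<le> ennreal (b ^ Suc k) * ennreal (6 * (1/2)^k)"
      unfolding S_def by (intro mult_left_mono meas_bound) auto
    also have "\<dots> = ennreal (6 * b * (b/2)^k)"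
      using b1 by (simp add: ennreal_mult[symmetric] power_divide field_simps)
    finally show "ennreal (b ^ Suc k) * emeasure U01 (S k) \<le> ennreal (6 * b * (b/2)^k)" .
  qed
  also have "\<dots> = ennreal (\<Sum>k. 6 * b * (b/2)^k)"
    using b1 b2 by (intro suminf_ennreal2 summable_mult summable_geometric) auto
  also have "(\<Sum>k. 6 * b * (b/2)^k) = 6 * b / (1 - b/2)"
    using b1 b2 by (simp add: suminf_mult suminf_geometric summable_geometric)
  finally have "(\<integral>\<^sup>+ y. inv_abs_powr d (e2pi y - p) \<partial>U01) \<le> 1 + ennreal (6 * b / (1 - b/2))"
    by (simp add: add_left_mono)
  also have "\<dots> = ennreal (Kd d)"
  proof -
    have "0 \<le> 6 * b / (1 - b/2)" using b1 b2 by (intro divide_nonneg_pos) auto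
    then show ?thesis using ennreal_plus[of 1 "6 * b / (1 - b/2)"] by (simp add: Kd_def b_def)
  qed
  finally show ?thesis .
qed

lemma Kd_pos: assumes "0 < d" "d < 1" shows "0 < Kd d"
proof -
  have "2 powr d < (2::real)" using assms powr_less_mono[of d 1 "2::real"] by simp
  then have "0 \<le> 6 * 2 powr d / (1 - 2 powr d / (2::real))" by (intro divide_nonneg_pos) auto
  then show ?thesis by (simp add: Kd_def)
qed

lemma scaled_bound:
  assumes d: "0 < d" "d < 1" and A: "A \<noteq> 0"
  shows "(\<integral>\<^sup>+ y. inv_abs_powr d (w + A * e2pi y) \<partial>U01) \<le> ennreal (Kd d) * ennreal (1 / norm A powr d)"
proof -
  define p where "p = - w / A"
  have "w + A * e2pi y = A * (e2pi y - p)" for y using A by (simp add: p_def field_simps)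
  then have "(\<integral>\<^sup>+ y. inv_abs_powr d (w + A * e2pi y) \<partial>U01)
      = (\<integral>\<^sup>+ y. ennreal (1 / norm A powr d) * inv_abs_powr d (e2pi y - p) \<partial>U01)"
    using A by (simp add: inv_abs_powr_scale)
  also have "\<dots> = ennreal (1 / norm A powr d) * (\<integral>\<^sup>+ y. inv_abs_powr d (e2pi y - p) \<partial>U01)"
    by (intro nn_integral_cmult measurable_restrict_space1) measurable
  also have "\<dots> \<le> ennreal (1 / norm A powr d) * ennreal (Kd d)"
    by (intro mult_left_mono int_bound d) auto
  finally show ?thesis by (simp add: mult.commute)
qed


lemma torus_prob: "prob_space (PiM I (\<lambda>_::nat. U01))"
  by (intro prob_space_PiM prob_U01)

lemma space_one: "emeasure (PiM I (\<lambda>_::nat. U01)) (space (PiM I (\<lambda>_::nat. U01))) = 1"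
  using prob_space.emeasure_space_1[OF torus_prob] .

lemma lower_bound:
  assumes d: "0 < d"
  shows "inv_powr d (\<Sum>j<J. norm (a j)) \<le> (\<integral>\<^sup>+ \<theta>. inv_abs_powr d (\<Sum>j<J. a j * e2pi (\<theta> j)) \<partial>torus J)"
proof -
  have pw: "inv_powr d (\<Sum>j<J. norm (a j)) \<le> inv_abs_powr d z" if "norm z \<le> (\<Sum>j<J. norm (a j))" for z
  proof (cases "z = 0")
    case True then show ?thesis by (simp add: inv_abs_powr_def)
  next
    case False
    then have "0 < norm z" by simp
    then have "1 / (\<Sum>j<J. norm (a j)) powr d \<le> 1 / norm z powr d"
      using that d by (intro divide_left_mono powr_mono2 mult_pos_pos) auto
    then show ?thesis using False that by (auto simp: inv_abs_powr_def inv_powr_def)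
  qed
  have "(\<integral>\<^sup>+ \<theta>. inv_powr d (\<Sum>j<J. norm (a j)) \<partial>torus J) \<le> (\<integral>\<^sup>+ \<theta>. inv_abs_powr d (\<Sum>j<J. a j * e2pi (\<theta> j)) \<partial>torus J)"
  proof (rule nn_integral_mono)
    fix \<theta> :: "nat \<Rightarrow> real"
    have "norm (\<Sum>j<J. a j * e2pi (\<theta> j)) \<le> (\<Sum>j<J. norm (a j * e2pi (\<theta> j)))" by (rule norm_sum)
    also have "\<dots> = (\<Sum>j<J. norm (a j))" by (simp add: norm_mult)
    finally show "inv_powr d (\<Sum>j<J. norm (a j)) \<le> inv_abs_powr d (\<Sum>j<J. a j * e2pi (\<theta> j))" by (rule pw)
  qed
  moreover have "(\<integral>\<^sup>+ \<theta>. inv_powr d (\<Sum>j<J. norm (a j)) \<partial>torus J) = inv_powr d (\<Sum>j<J. norm (a j))"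
    unfolding torus_def by (simp add: space_one)
  ultimately show ?thesis by simp
qed

lemma upper_bound:
  assumes d: "0 < d" "d < 1" and J: "1 \<le> J"
  shows "(\<integral>\<^sup>+ \<theta>. inv_abs_powr d (\<Sum>j<J. a j * e2pi (\<theta> j)) \<partial>torus J)
     \<le> ennreal (Kd d * real J powr d) * inv_powr d (\<Sum>j<J. norm (a j))"
proof (cases "(\<Sum>j<J. norm (a j)) = 0")
  case True
  have "0 < Kd d * real J powr d" using Kd_pos[OF d] J by simp
  then have "ennreal (Kd d * real J powr d) * inv_powr d (\<Sum>j<J. norm (a j)) = top"
    by (simp only: inv_powr_def True if_True) (use Kd_pos[OF d] J in \<open>simp add: ennreal_mult_top\<close>)
  then show ?thesis by simp
next
  case False
  define S where "S = (\<Sum>j<J. norm (a j))"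
  have S0: "0 < S" using False by (simp add: S_def sum_nonneg order_le_neq_trans)
  have "0 \<in> {..<J}" using J by auto
  then have "{..<J} \<noteq> {}" by blast
  define Mx where "Mx = Max ((\<lambda>j. norm (a j)) ` {..<J})"
  have "Mx \<in> (\<lambda>j. norm (a j)) ` {..<J}" unfolding Mx_def using \<open>{..<J} \<noteq> {}\<close> by (intro Max_in) auto
  then obtain m where m: "m < J" "norm (a m) = Mx" by auto
  have mx: "norm (a j) \<le> norm (a m)" if "j < J" for j
    unfolding m(2) Mx_def using that by (intro Max_ge) auto
  have SJ: "S \<le> real J * norm (a m)"
  proof -
    have "S \<le> (\<Sum>j<J. norm (a m))" unfolding S_def by (intro sum_mono mx) auto
    then show ?thesis by simp
  qed
  have am: "a m \<noteq> 0" using SJ S0 by auto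
  define I where "I = {..<J} - {m}"
  have IJ: "insert m I = {..<J}" "m \<notin> I" "finite I" using m by (auto simp: I_def)
  interpret P: product_prob_space "\<lambda>_::nat. U01" by (rule prod_U01)
  have fm: "(\<lambda>\<theta>. inv_abs_powr d (\<Sum>j<J. a j * e2pi (\<theta> j))) \<in> borel_measurable (PiM (insert m I) (\<lambda>_. U01))"
    using F_meas_gen[of J "insert m I" d a 0] IJ by simp
  have "(\<integral>\<^sup>+ \<theta>. inv_abs_powr d (\<Sum>j<J. a j * e2pi (\<theta> j)) \<partial>torus J)
      = (\<integral>\<^sup>+ \<theta>. inv_abs_powr d (\<Sum>j<J. a j * e2pi (\<theta> j)) \<partial>PiM (insert m I) (\<lambda>_. U01))"
    unfolding torus_def IJ(1) ..
  also have "\<dots> = (\<integral>\<^sup>+ x. (\<integral>\<^sup>+ y. inv_abs_powr d (\<Sum>j<J. a j * e2pi ((x(m := y)) j)) \<partial>U01) \<partial>PiM I (\<lambda>_. U01))"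
    by (rule P.product_nn_integral_insert[OF IJ(3) IJ(2) fm])
  also have "\<dots> \<le> (\<integral>\<^sup>+ x. ennreal (Kd d) * ennreal (1 / norm (a m) powr d) \<partial>PiM I (\<lambda>_. U01))"
  proof (rule nn_integral_mono)
    fix x :: "nat \<Rightarrow> real"
    have "(\<Sum>j<J. a j * e2pi ((x(m := y)) j)) = (\<Sum>j\<in>I. a j * e2pi (x j)) + a m * e2pi y" for y
    proof -
      have "(\<Sum>j<J. a j * e2pi ((x(m := y)) j)) = (\<Sum>j\<in>insert m I. a j * e2pi ((x(m := y)) j))"
        unfolding IJ(1) ..
      also have "\<dots> = a m * e2pi y + (\<Sum>j\<in>I. a j * e2pi ((x(m := y)) j))"
        using sum.insert[OF IJ(3) IJ(2), of "\<lambda>j. a j * e2pi ((x(m := y)) j)"] by simp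
      also have "(\<Sum>j\<in>I. a j * e2pi ((x(m := y)) j)) = (\<Sum>j\<in>I. a j * e2pi (x j))"
        using IJ by (intro sum.cong) auto
      finally show ?thesis by simp
    qed
    then show "(\<integral>\<^sup>+ y. inv_abs_powr d (\<Sum>j<J. a j * e2pi ((x(m := y)) j)) \<partial>U01)
        \<le> ennreal (Kd d) * ennreal (1 / norm (a m) powr d)"
      using scaled_bound[OF d am] by simp
  qed
  also have "\<dots> = ennreal (Kd d) * ennreal (1 / norm (a m) powr d)"
    by (simp add: space_one)
  also have "\<dots> \<le> ennreal (Kd d * real J powr d) * inv_powr d S"
  proof -
    have "S powr d \<le> (real J * norm (a m)) powr d" using SJ S0 d by (intro powr_mono2) auto
    also have "\<dots> = real J powr d * norm (a m) powr d" by (simp add: powr_mult)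
    finally have h: "S powr d \<le> real J powr d * norm (a m) powr d" .
    have "Kd d * (1 / norm (a m) powr d) \<le> Kd d * real J powr d * (1 / S powr d)"
      using h Kd_pos[OF d] am S0 by (simp add: field_simps)
    then show ?thesis using S0 Kd_pos[OF d] J
      by (simp add: inv_powr_def ennreal_mult[symmetric] ennreal_leI)
  qed
  finally show ?thesis by (simp add: S_def)
qed

theorem lemma4p4:
  fixes \<delta> :: real and J :: nat
  assumes "0 < \<delta>" and "\<delta> < 1" and "1 \<le> J"
  shows "\<exists>c C :: real. 0 < c \<and> 0 < C \<and>
    (\<forall>a :: nat \<Rightarrow> complex.
      (\<integral>\<^sup>+ \<theta>. inv_abs_powr \<delta> (\<Sum>j<J. a j * e2pi (\<theta> j)) \<partial>torus J)
        = (\<integral>\<^sup>+ \<theta>. inv_abs_powr \<delta> ((\<Sum>j<J - 1. a j * e2pi (\<theta> j)) + a (J - 1)) \<partial>torus (J - 1))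
      \<and> ennreal c * inv_powr \<delta> (\<Sum>j<J. norm (a j))
          \<le> (\<integral>\<^sup>+ \<theta>. inv_abs_powr \<delta> (\<Sum>j<J. a j * e2pi (\<theta> j)) \<partial>torus J)
      \<and> (\<integral>\<^sup>+ \<theta>. inv_abs_powr \<delta> (\<Sum>j<J. a j * e2pi (\<theta> j)) \<partial>torus J)
          \<le> ennreal C * inv_powr \<delta> (\<Sum>j<J. norm (a j)))"
proof (intro exI conjI allI)
  show "0 < (1::real)" by simp
  show "0 < Kd \<delta> * real J powr \<delta>" using Kd_pos[OF assms(1,2)] assms(3) by simp
  fix a :: "nat \<Rightarrow> complex"
  obtain n where n: "J = Suc n" using assms(3) by (cases J) auto
  show "(\<integral>\<^sup>+ \<theta>. inv_abs_powr \<delta> (\<Sum>j<J. a j * e2pi (\<theta> j)) \<partial>torus J)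
        = (\<integral>\<^sup>+ \<theta>. inv_abs_powr \<delta> ((\<Sum>j<J - 1. a j * e2pi (\<theta> j)) + a (J - 1)) \<partial>torus (J - 1))"
    unfolding n using eq_part[where d=\<delta> and n=n and a=a] by simp
  show "ennreal 1 * inv_powr \<delta> (\<Sum>j<J. norm (a j))
          \<le> (\<integral>\<^sup>+ \<theta>. inv_abs_powr \<delta> (\<Sum>j<J. a j * e2pi (\<theta> j)) \<partial>torus J)"
    using lower_bound[OF assms(1)] by simp
  show "(\<integral>\<^sup>+ \<theta>. inv_abs_powr \<delta> (\<Sum>j<J. a j * e2pi (\<theta> j)) \<partial>torus J)
          \<le> ennreal (Kd \<delta> * real J powr \<delta>) * inv_powr \<delta> (\<Sum>j<J. norm (a j))"
    by (rule upper_bound[OF assms])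
qed

end
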